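(* Let $\mathscr{D}$ be as in the context. Let $a=\{a_I\}_{I\in\mathscr{D}}$ with $a_I\ge0$ be a Carleson sequence. Let $\alpha:[1,\infty)\to\mathbb{R}_+$ be an increasing function with $\int_1^\infty\frac{dt}{t\alpha(t)}<\infty$, and let $u$ be a weight. Then for every $f\in L^2(u)$, $$\sum_{I\in\mathscr{D}}\frac{|\langle fu\rangle_I|^2}{\alpha(\mathbf{u}^*_I/\mathbf{u}_I)\,\mathbf{u}^*_I}\,a_I\,|I|\le C\,\|a\|_{\mathrm{Carl}}\,\|f\|^2_{L^2(u)},$$ where $C=4C_\alpha$ and $C_\alpha=\frac{1}{\alpha(1)}+\int_1^\infty\frac{dt}{t\alpha(t)}$.
   Context: Setting: $(\mathcal{X},\mu)$ is a $\sigma$-finite measure space with an increasing filtration of atomic $\sigma$-algebras $\mathfrak{S}_n$, $n\in\mathbb{Z}$. Each $\mathfrak{S}_n$ is generated by a countable disjoint collection $\mathscr{D}_n$ of sets of positive measure such that every set of $\mathfrak{S}_n$ is a union of sets of $\mathscr{D}_n$. Put $\mathscr{D}=\bigcup_n\mathscr{D}_n$; a set may lie in several $\mathscr{D}_n$, but not in all of them. Write $|A|=\mu(A)$ and $\langle f\rangle_I=|I|^{-1}\int_If\,d\mu$. Maximal function: $Mf(x)=\sup_{I\in\mathscr{D},\,x\in I}|I|^{-1}\int_I|f|\,d\mu$ is the martingale maximal function. Weights and bumps: a weight is a nonnegative function integrable on each $I\in\mathscr{D}$. We set $\mathbf{u}_I=\langle u\rangle_I$ and $\mathbf{u}^*_I=\langle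 M(u\mathbf{1}_I)\rangle_I$; note that $\mathbf{u}^*_I\ge\mathbf{u}_I$. Carleson sequences: $\|a\|_{\mathrm{Carl}}:=\sup_{I_0\in\mathscr{D}}|I_0|^{-1}\sum_{I\in\mathscr{D},\,I\subset I_0}|a_I|\,|I|$, and $a$ is Carleson if this is finite. *)

theory Defs
  imports "HOL-Analysis.Analysis"
begin

text \<open>Standing setting. D n is the countable generating partition of the atomic
sigma-algebra S_n = sigma_sets (space M) (D n); the filtration is increasing in n.\<close>

definition filtration_setting :: "'a measure \<Rightarrow> (int \<Rightarrow> 'a set set) \<Rightarrow> bool" where
  "filtration_setting M D \<longleftrightarrow>
     sigma_finite_measure M \<and>
     (\<forall>n. countable (D n) \<and> D n \<subseteq> sets M \<and> disjoint (D n) \<and>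
          (\<forall>I\<in>D n. 0 < emeasure M I \<and> emeasure M I < \<infinity>) \<and>
          (\<forall>A\<in>sigma_sets (space M) (D n). \<exists>F\<subseteq>D n. A = \<Union>F)) \<and>
     (\<forall>n. sigma_sets (space M) (D n) \<subseteq> sigma_sets (space M) (D (n + 1))) \<and>
     (\<forall>I. \<not> (\<forall>n. I \<in> D n))"

definition DD :: "(int \<Rightarrow> 'a set set) \<Rightarrow> 'a set set" where
  "DD D = (\<Union>n. D n)"

definition maxf :: "'a measure \<Rightarrow> (int \<Rightarrow> 'a set set) \<Rightarrow> ('a \<Rightarrow> real) \<Rightarrow> 'a \<Rightarrow> ennreal" where
  "maxf M D f x = (SUP I\<in>{I\<in>DD D. x \<in> I}. (\<integral>\<^sup>+ y\<in>I. ennreal \<bar>f y\<bar> \<partial>M) / emeasure M I)"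

definition avg :: "'a measure \<Rightarrow> 'a set \<Rightarrow> ('a \<Rightarrow> real) \<Rightarrow> real" where
  "avg M I g = (set_lebesgue_integral M I g) / measure M I"

definition ustar :: "'a measure \<Rightarrow> (int \<Rightarrow> 'a set set) \<Rightarrow> ('a \<Rightarrow> real) \<Rightarrow> 'a set \<Rightarrow> ennreal" where
  "ustar M D u I = (\<integral>\<^sup>+ x\<in>I. maxf M D (\<lambda>y. indicator I y * u y) x \<partial>M) / emeasure M I"

definition carl_norm :: "'a measure \<Rightarrow> (int \<Rightarrow> 'a set set) \<Rightarrow> ('a set \<Rightarrow> real) \<Rightarrow> ennreal" where
  "carl_norm M D a = (SUP I0\<in>DD D.
      (\<integral>\<^sup>+ I. ennreal (\<bar>a I\<bar> * measure M I) \<partial>count_space {I\<in>DD D. I \<subseteq> I0}) / emeasure M I0)"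

text \<open>Summand of the left-hand side.  If u*_I = \<infinity> the summand is 0 (limit of
  1/(\<alpha>(t) t) as t \<rightarrow> \<infinity>); if u_I = 0 then also <fu>_I = 0 and the summand is 0.\<close>
definition lhs_term :: "'a measure \<Rightarrow> (int \<Rightarrow> 'a set set) \<Rightarrow> (real \<Rightarrow> real) \<Rightarrow> ('a \<Rightarrow> real)
    \<Rightarrow> ('a \<Rightarrow> real) \<Rightarrow> ('a set \<Rightarrow> real) \<Rightarrow> 'a set \<Rightarrow> real" where
  "lhs_term M D \<alpha> u f a I =
     (if ustar M D u I = \<infinity> \<or> avg M I u = 0 then 0
      else (avg M I (\<lambda>x. f x * u x))\<^sup>2
             / (\<alpha> (enn2real (ustar M D u I) / avg M I u) * enn2real (ustar M D u I))
             * a I * measure M I)"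

end

theory Submission
  imports Defs
begin


locale fs =
  fixes M :: "'a measure" and D :: "int \<Rightarrow> 'a set set"
  assumes fs: "filtration_setting M D"
begin

lemma Dn: "countable (D n) \<and> D n \<subseteq> sets M \<and> disjoint (D n) \<and>
          (\<forall>I\<in>D n. 0 < emeasure M I \<and> emeasure M I < \<infinity>) \<and>
          (\<forall>A\<in>sigma_sets (space M) (D n). \<exists>F\<subseteq>D n. A = \<Union>F)"
  by (rule fs[unfolded filtration_setting_def, THEN conjunct2, THEN conjunct1, THEN spec])

lemma Dinc: "sigma_sets (space M) (D n) \<subseteq> sigma_sets (space M) (D (n + 1))"
  by (rule fs[unfolded filtration_setting_def, THEN conjunct2, THEN conjunct2, THEN conjunct1, THEN spec])

lemma Dn_count: "countable (D n)" using Dn[of n] by (rule conjunct1)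
lemma Dn_sets: "D n \<subseteq> sets M" using Dn[of n] by (elim conjE)
lemma Dn_meas: "\<forall>I\<in>D n. 0 < emeasure M I \<and> emeasure M I < \<infinity>" using Dn[of n] by (elim conjE)

lemma D_sets: "I \<in> D n \<Longrightarrow> I \<in> sets M"
  using Dn_sets[of n] by (rule subsetD)

lemma D_pos: "I \<in> D n \<Longrightarrow> 0 < emeasure M I"
  using Dn_meas[of n] by simp

lemma D_fin: "I \<in> D n \<Longrightarrow> emeasure M I < \<infinity>"
  using Dn_meas[of n] by simp

lemma DD_D: "I \<in> DD D \<Longrightarrow> \<exists>n. I \<in> D n"
  unfolding DD_def by simp

lemma DD_sets: "I \<in> DD D \<Longrightarrow> I \<in> sets M"
  using DD_D D_sets by metis

lemma DD_pos: "I \<in> DD D \<Longrightarrow> 0 < emeasure M I"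
  using DD_D D_pos by metis

lemma DD_fin: "I \<in> DD D \<Longrightarrow> emeasure M I < \<infinity>"
  using DD_D D_fin by metis

lemma DD_measure_pos: "I \<in> DD D \<Longrightarrow> 0 < measure M I"
  using DD_pos DD_fin by (simp add: measure_def enn2real_positive_iff)

lemma DD_emeasure: "I \<in> DD D \<Longrightarrow> emeasure M I = ennreal (measure M I)"
  using DD_fin[of I] emeasure_eq_ennreal_measure[of M I] by simp

lemma DD_ne: "I \<in> DD D \<Longrightarrow> I \<noteq> {}"
  using DD_pos by fastforce

lemma DD_countable: "countable (DD D)"
  unfolding DD_def using Dn_count by (simp add: countable_UN)

lemma sigma_mono: "n \<le> m \<Longrightarrow> sigma_sets (space M) (D n) \<subseteq> sigma_sets (space M) (D m)"
proof (induction m rule: int_ge_induct)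
  case base then show ?case by simp
next
  case (step i) then show ?case using Dinc[of i] by blast
qed

lemma laminar_aux:
  assumes "I \<in> D n" "J \<in> D m" "n \<le> m"
  shows "J \<subseteq> I \<or> I \<inter> J = {}"
proof -
  have "I \<in> sigma_sets (space M) (D n)"
    using assms(1) by (rule sigma_sets.Basic)
  then have "I \<in> sigma_sets (space M) (D m)" using sigma_mono[OF assms(3)] by blast
  moreover have "\<forall>A\<in>sigma_sets (space M) (D m). \<exists>F\<subseteq>D m. A = \<Union>F"
    by (rule Dn[of m, THEN conjunct2, THEN conjunct2, THEN conjunct2, THEN conjunct2])
  ultimately obtain F where F: "F \<subseteq> D m" "I = \<Union>F"
    by blast
  have dj: "disjoint (D m)" by (rule Dn[of m, THEN conjunct2, THEN conjunct2, THEN conjunct1])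
  show ?thesis
  proof (cases "J \<in> F")
    case True then show ?thesis using F by blast
  next
    case False
    have "K \<inter> J = {}" if "K \<in> F" for K
    proof -
      have "K \<noteq> J" using False that by blast
      then show ?thesis using dj F(1) assms(2) that unfolding disjoint_def by blast
    qed
    then show ?thesis using F by blast
  qed
qed

lemma laminar:
  assumes "I \<in> DD D" "J \<in> DD D"
  shows "I \<subseteq> J \<or> J \<subseteq> I \<or> I \<inter> J = {}"
proof -
  obtain n m where "I \<in> D n" "J \<in> D m" using assms unfolding DD_def by blast
  show ?thesis
  proof (cases "n \<le> m")
    case True then show ?thesis using laminar_aux[of I n J m] \<open>I \<in> D n\<close> \<open>J \<in> D m\<close> by blast
  next
    case False then show ?thesis using laminar_aux[of J m I n] \<open>I \<in> D n\<close> \<open>J \<in> D m\<close> by auto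
  qed
qed

end


lemma titu2:
  fixes p q s t :: real
  assumes "0 \<le> s" "0 \<le> t" "s = 0 \<Longrightarrow> p = 0" "t = 0 \<Longrightarrow> q = 0"
  shows "(p+q)^2/(s+t) \<le> p^2/s + q^2/t"
proof (cases "s = 0 \<or> t = 0")
  case True then show ?thesis using assms by auto
next
  case False
  then have s: "0 < s" and t: "0 < t" using assms by auto
  have "p^2/s + q^2/t - (p+q)^2/(s+t) = ((p^2 * t + q^2 * s) * (s+t) - (p+q)^2 * (s * t)) / (s * t * (s+t))"
    using s t by (simp add: field_simps)
  also have "(p^2 * t + q^2 * s) * (s+t) - (p+q)^2 * (s * t) = (p * t - q * s)^2"
    by algebra
  finally have e: "p^2/s + q^2/t - (p+q)^2/(s+t) = (p * t - q * s)^2 / (s * t * (s+t))" .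
  have "(p * t - q * s)^2 / (s * t * (s+t)) \<ge> 0" using s t by simp
  then show ?thesis using e by simp
qed

lemma titu:
  fixes a b :: "'i \<Rightarrow> real"
  assumes "finite T" "\<forall>i\<in>T. 0 \<le> b i \<and> (b i = 0 \<longrightarrow> a i = 0)"
  shows "(\<Sum>i\<in>T. a i)^2/(\<Sum>i\<in>T. b i) \<le> (\<Sum>i\<in>T. (a i)^2/b i)"
  using assms
proof (induction T rule: finite_induct)
  case empty then show ?case by simp
next
  case (insert x F)
  have b0: "0 \<le> (\<Sum>i\<in>F. b i)" using insert by (simp add: sum_nonneg)
  have z: "(\<Sum>i\<in>F. a i) = 0" if "(\<Sum>i\<in>F. b i) = 0"
  proof -
    have "\<forall>i\<in>F. b i = 0" using sum_nonneg_eq_0_iff[OF insert(1)] that insert(4) by auto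
    then show ?thesis using insert(4) by simp
  qed
  have "(\<Sum>i\<in>insert x F. a i)^2/(\<Sum>i\<in>insert x F. b i) = (a x + (\<Sum>i\<in>F. a i))^2/(b x + (\<Sum>i\<in>F. b i))"
    using insert by simp
  also have "\<dots> \<le> (a x)^2/b x + (\<Sum>i\<in>F. a i)^2/(\<Sum>i\<in>F. b i)"
    by (rule titu2) (use insert b0 z in auto)
  also have "\<dots> \<le> (a x)^2/b x + (\<Sum>i\<in>F. (a i)^2/b i)"
    using insert by simp
  finally show ?case using insert by simp
qed

lemma psi_anti:
  fixes \<alpha> :: "real \<Rightarrow> real"
  assumes pos: "\<forall>t\<ge>1. 0 < \<alpha> t" and mono: "mono_on {1..} \<alpha>" and xy: "1 \<le> x" "x \<le> y"
  shows "1/(y * \<alpha> y) \<le> 1/(x * \<alpha> x)"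
proof -
  have "\<alpha> x \<le> \<alpha> y" using mono xy unfolding mono_on_def by auto
  moreover have "0 < \<alpha> x" using pos xy by auto
  ultimately have "x * \<alpha> x \<le> y * \<alpha> y" using xy by (intro mult_mono) auto
  moreover have "0 < x * \<alpha> x" using \<open>0 < \<alpha> x\<close> xy by simp
  moreover have "0 < y * \<alpha> y" using pos xy by simp
  ultimately show ?thesis by (intro divide_left_mono) auto
qed

lemma abel:
  fixes \<alpha> :: "real \<Rightarrow> real" and r W :: "'i \<Rightarrow> real" and K :: real
  assumes pos: "\<forall>t\<ge>1. 0 < \<alpha> t" and mono: "mono_on {1..} \<alpha>"
    and int: "set_integrable lborel {1..} (\<lambda>t. 1/(t*\<alpha> t))"
    and T: "finite T" and r1: "\<forall>i\<in>T. 1 \<le> r i" and W0: "\<forall>i\<in>T. 0 \<le> W i" and K0: "0 \<le> K"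
    and hyp: "\<forall>t\<ge>1. (\<Sum>i\<in>{i\<in>T. r i \<le> t}. W i) \<le> K*t"
  shows "(\<Sum>i\<in>T. W i * (1/(r i * \<alpha> (r i)))) \<le> K * (1/\<alpha> 1 + (LINT t:{1..}|lborel. 1/(t*\<alpha> t)))"
proof -
  define \<psi> where "\<psi> t = 1/(t*\<alpha> t)" for t
  define I where "I s = (LINT t:{1..s}|lborel. \<psi> t)" for s
  have intsub: "set_integrable lborel S \<psi>" if "S \<in> sets lborel" "S \<subseteq> {1..}" for S
    using set_integrable_subset[OF int that] unfolding \<psi>_def by simp
  have psi_nonneg: "0 \<le> \<psi> t" if "1 \<le> t" for t
    using pos that unfolding \<psi>_def by (simp add: less_imp_le)
  have psi_anti': "\<psi> y \<le> \<psi> x" if "1 \<le> x" "x \<le> y" for x y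
    unfolding \<psi>_def by (rule psi_anti[OF pos mono that])
  have I0: "0 \<le> I s" for s
    unfolding I_def set_lebesgue_integral_def
    by (rule integral_nonneg_AE) (auto simp: psi_nonneg split: split_indicator)
  have Ile: "I s \<le> (LINT t:{1..}|lborel. \<psi> t)" for s
  proof -
    have i1: "integrable lborel (\<lambda>t. indicator {1..s} t *\<^sub>R \<psi> t)"
      using intsub[of "{1..s}"] unfolding set_integrable_def by auto
    have i2: "integrable lborel (\<lambda>t. indicator {1..} t *\<^sub>R \<psi> t)"
      using intsub[of "{1..}"] unfolding set_integrable_def by auto
    show ?thesis unfolding I_def set_lebesgue_integral_def
      by (rule integral_mono[OF i1 i2]) (auto simp: psi_nonneg split: split_indicator)
  qed
  have Isplit: "I \<rho> + (s - \<rho>) * \<psi> s \<le> I s" if "1 \<le> \<rho>" "\<rho> \<le> s" for \<rho> s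
  proof -
    have e: "{1..s} = {1..\<rho>} \<union> {\<rho><..s}" using that by auto
    have "I s = (LINT t:({1..\<rho>} \<union> {\<rho><..s})|lborel. \<psi> t)"
      unfolding I_def by (simp only: e)
    also have "\<dots> = I \<rho> + (LINT t:{\<rho><..s}|lborel. \<psi> t)"
      unfolding I_def by (rule set_integral_Un) (use that in \<open>auto intro!: intsub\<close>)
    finally have "I s = I \<rho> + (LINT t:{\<rho><..s}|lborel. \<psi> t)" .
    moreover have "(LINT t:{\<rho><..s}|lborel. \<psi> s) \<le> (LINT t:{\<rho><..s}|lborel. \<psi> t)"
      using that by (intro set_integral_mono intsub psi_anti') (auto simp: set_integrable_def)
    moreover have "(LINT t:{\<rho><..s}|lborel. \<psi> s) = (s - \<rho>) * \<psi> s"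
      using that by (simp add: set_integral_const)
    ultimately show ?thesis by simp
  qed
  have sps: "s * \<psi> s \<le> 1 / \<alpha> 1" if "1 \<le> s" for s
  proof -
    have "s * \<psi> s = 1 / \<alpha> s" using that pos unfolding \<psi>_def by simp
    also have "\<dots> \<le> 1 / \<alpha> 1" using pos mono that unfolding mono_on_def
      by (intro divide_left_mono) auto
    finally show ?thesis .
  qed
  have main: "\<forall>s\<ge>1. (\<forall>i\<in>T. r i \<le> s) \<longrightarrow> (\<Sum>i\<in>T. W i * \<psi> (r i))
      \<le> K * (1/\<alpha> 1 + I s) + ((\<Sum>i\<in>T. W i) - K * s) * \<psi> s"
    using T r1 W0 hyp
  proof (induction "card T" arbitrary: T rule: less_induct)
    case less
    show ?case
    proof (cases "T = {}")
      case True
      show ?thesis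
      proof (intro allI impI)
        fix s :: real assume s: "1 \<le> s"
        have "K * (s * \<psi> s) \<le> K * (1/\<alpha> 1 + I s)"
          using sps[OF s] I0[of s] K0 by (intro mult_left_mono) auto
        then show "(\<Sum>i\<in>T. W i * \<psi> (r i)) \<le> K * (1/\<alpha> 1 + I s) + ((\<Sum>i\<in>T. W i) - K * s) * \<psi> s"
          using True by (simp add: algebra_simps)
      qed
    next
      case False
      have "Max (r ` T) \<in> r ` T" using less(2) False by (intro Max_in) auto
      then obtain i0 where i0a: "i0 \<in> T" "r i0 = Max (r ` T)" by auto
      have i0: "i0 \<in> T" "\<forall>i\<in>T. r i \<le> r i0" using i0a less(2) by auto
      define T' where "T' = T - {i0}"
      define \<rho> where "\<rho> = r i0"
      have \<rho>1: "1 \<le> \<rho>" using less(3) i0 unfolding \<rho>_def by auto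
      have cT': "card T' < card T" unfolding T'_def by (rule card_Diff1_less[OF less(2) i0(1)])
      have hypT': "\<forall>t\<ge>1. (\<Sum>i\<in>{i\<in>T'. r i \<le> t}. W i) \<le> K*t"
      proof (intro allI impI)
        fix t :: real assume "1 \<le> t"
        have "(\<Sum>i\<in>{i\<in>T'. r i \<le> t}. W i) \<le> (\<Sum>i\<in>{i\<in>T. r i \<le> t}. W i)"
          using less(2,4) unfolding T'_def by (intro sum_mono2) auto
        also have "\<dots> \<le> K * t" using less(5) \<open>1 \<le> t\<close> by auto
        finally show "(\<Sum>i\<in>{i\<in>T'. r i \<le> t}. W i) \<le> K*t" .
      qed
      have IH: "(\<Sum>i\<in>T'. W i * \<psi> (r i)) \<le> K * (1/\<alpha> 1 + I \<rho>) + ((\<Sum>i\<in>T'. W i) - K * \<rho>) * \<psi> \<rho>"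
        using less(1)[OF cT', of] less(2-4) hypT' i0 \<rho>1 unfolding T'_def \<rho>_def by auto
      have sumT: "(\<Sum>i\<in>T. g i) = g i0 + (\<Sum>i\<in>T'. g i)" for g :: "'i \<Rightarrow> real"
        using i0 less(2) unfolding T'_def by (simp add: sum.remove)
      have GT: "(\<Sum>i\<in>T. W i) \<le> K * \<rho>"
      proof -
        have "{i\<in>T. r i \<le> \<rho>} = T" using i0 unfolding \<rho>_def by auto
        then show ?thesis using less(5) \<rho>1 by metis
      qed
      show ?thesis
      proof (intro allI impI)
        fix s :: real assume s: "1 \<le> s" and rs: "\<forall>i\<in>T. r i \<le> s"
        have \<rho>s: "\<rho> \<le> s" using rs i0 unfolding \<rho>_def by auto
        have A: "(\<Sum>i\<in>T. W i * \<psi> (r i)) \<le> K * (1/\<alpha> 1 + I \<rho>) + ((\<Sum>i\<in>T. W i) - K * \<rho>) * \<psi> \<rho>"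
          using IH sumT[of "\<lambda>i. W i * \<psi> (r i)"] sumT[of W] unfolding \<rho>_def by (simp add: algebra_simps)
        have B: "((\<Sum>i\<in>T. W i) - K * \<rho>) * \<psi> \<rho> \<le> ((\<Sum>i\<in>T. W i) - K * \<rho>) * \<psi> s"
          using GT psi_anti'[OF \<rho>1 \<rho>s] by (intro mult_left_mono_neg) auto
        have C: "K * I \<rho> + K * ((s - \<rho>) * \<psi> s) \<le> K * I s"
          using Isplit[OF \<rho>1 \<rho>s] K0 by (simp add: distrib_left[symmetric] mult_left_mono)
        show "(\<Sum>i\<in>T. W i * \<psi> (r i)) \<le> K * (1/\<alpha> 1 + I s) + ((\<Sum>i\<in>T. W i) - K * s) * \<psi> s"
          using A B C by (simp add: algebra_simps)
      qed
    qed
  qed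
  define s where "s = max 1 (if T = {} then 1 else Max (r ` T))"
  have s1: "1 \<le> s" unfolding s_def by simp
  have rs: "\<forall>i\<in>T. r i \<le> s"
  proof
    fix i assume "i \<in> T"
    then have "r i \<le> Max (r ` T)" using T by simp
    then show "r i \<le> s" unfolding s_def using \<open>i \<in> T\<close> by auto
  qed
  have "(\<Sum>i\<in>T. W i * \<psi> (r i)) \<le> K * (1/\<alpha> 1 + I s) + ((\<Sum>i\<in>T. W i) - K * s) * \<psi> s"
    using main s1 rs by blast
  also have "((\<Sum>i\<in>T. W i) - K * s) * \<psi> s \<le> 0"
  proof -
    have "{i\<in>T. r i \<le> s} = T" using rs by auto
    then have "(\<Sum>i\<in>T. W i) \<le> K * s" using hyp s1 by metis
    then show ?thesis using psi_nonneg[OF s1] by (simp add: mult_nonpos_nonneg)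
  qed
  also have "K * (1/\<alpha> 1 + I s) \<le> K * (1/\<alpha> 1 + (LINT t:{1..}|lborel. \<psi> t))"
    using Ile[of s] K0 by (intro mult_left_mono) auto
  finally show ?thesis unfolding \<psi>_def by simp
qed



definition maxels :: "'a set set \<Rightarrow> 'a set set" where
  "maxels G = {L\<in>G. \<forall>K\<in>G. L \<subseteq> K \<longrightarrow> K = L}"

lemma maxels_sub: "maxels G \<subseteq> G"
  unfolding maxels_def by auto

lemma maxels_cover:
  assumes "finite G" "I \<in> G" shows "\<exists>L\<in>maxels G. I \<subseteq> L"
proof -
  obtain m where "m \<in> G" "I \<subseteq> m" "\<forall>b\<in>G. m \<subseteq> b \<longrightarrow> m = b"
    using finite_has_maximal2[OF assms] by blast
  then show ?thesis unfolding maxels_def by blast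
qed

lemma Union_maxels: "finite G \<Longrightarrow> \<Union>(maxels G) = \<Union>G"
  using maxels_sub maxels_cover by blast

context fs
begin

lemma maxels_disj:
  assumes "G \<subseteq> DD D" "L1 \<in> maxels G" "L2 \<in> maxels G" "L1 \<noteq> L2"
  shows "L1 \<inter> L2 = {}"
proof -
  have "L1 \<in> DD D" "L2 \<in> DD D" using assms maxels_sub by blast+
  then have "L1 \<subseteq> L2 \<or> L2 \<subseteq> L1 \<or> L1 \<inter> L2 = {}" by (rule laminar)
  then show ?thesis using assms unfolding maxels_def by blast
qed

lemma maxels_disjoint_family: "G \<subseteq> DD D \<Longrightarrow> disjoint_family_on (\<lambda>L. L) (maxels G)"
  unfolding disjoint_family_on_def using maxels_disj by blast

lemma sum_maxels:
  assumes "finite G" "G \<subseteq> DD D"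
  shows "(\<Sum>I\<in>G. g I) = (\<Sum>L\<in>maxels G. \<Sum>I\<in>{I\<in>G. I \<subseteq> L}. g I)"
proof -
  have e: "G = (\<Union>L\<in>maxels G. {I\<in>G. I \<subseteq> L})" using maxels_cover[OF assms(1)] by blast
  have d: "\<forall>L1\<in>maxels G. \<forall>L2\<in>maxels G. L1 \<noteq> L2 \<longrightarrow> {I\<in>G. I \<subseteq> L1} \<inter> {I\<in>G. I \<subseteq> L2} = {}"
  proof (intro ballI impI)
    fix L1 L2 assume h: "L1 \<in> maxels G" "L2 \<in> maxels G" "L1 \<noteq> L2"
    have "L1 \<inter> L2 = {}" using maxels_disj[OF assms(2) h] .
    moreover have "I \<noteq> {}" if "I \<in> G" for I using that assms(2) DD_ne by blast
    ultimately show "{I\<in>G. I \<subseteq> L1} \<inter> {I\<in>G. I \<subseteq> L2} = {}" by blast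
  qed
  have "(\<Sum>I\<in>G. g I) = (\<Sum>I\<in>(\<Union>L\<in>maxels G. {I\<in>G. I \<subseteq> L}). g I)"
    using e by simp
  also have "\<dots> = (\<Sum>L\<in>maxels G. \<Sum>I\<in>{I\<in>G. I \<subseteq> L}. g I)"
    by (rule sum.UNION_disjoint) (use assms d finite_subset[OF maxels_sub assms(1)] in auto)
  finally show ?thesis .
qed

lemma ennreal_measure_le: "ennreal (measure M S) \<le> emeasure M S"
  by (cases "emeasure M S = top") (auto simp: emeasure_eq_ennreal_measure)

end

locale th = fs M D for M :: "'a measure" and D +
  fixes a :: "'a set \<Rightarrow> real" and \<alpha> :: "real \<Rightarrow> real" and u f :: "'a \<Rightarrow> real"
  assumes a_nonneg: "\<forall>I\<in>DD D. 0 \<le> a I"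
    and a_carleson: "carl_norm M D a < \<infinity>"
    and alpha_pos: "\<forall>t\<ge>1. 0 < \<alpha> t"
    and alpha_mono: "mono_on {1..} \<alpha>"
    and alpha_int: "set_integrable lborel {1..} (\<lambda>t. 1 / (t * \<alpha> t))"
    and u_meas: "u \<in> borel_measurable M"
    and u_nonneg: "\<forall>x\<in>space M. 0 \<le> u x"
    and u_loc_int: "\<forall>I\<in>DD D. set_integrable M I u"
    and f_meas: "f \<in> borel_measurable M"
    and f_L2: "(\<integral>\<^sup>+ x. ennreal ((f x)\<^sup>2 * u x) \<partial>M) < \<infinity>"
begin

definition "A = enn2real (carl_norm M D a)"
definition "W S = (LINT x:S|M. u x)"

lemma A_nonneg: "0 \<le> A" unfolding A_def by simp

lemma carl_eq: "carl_norm M D a = ennreal A"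
  unfolding A_def using a_carleson by (simp add: less_top)

lemma carl_fin:
  assumes J: "J \<in> DD D" and G: "finite G" "G \<subseteq> DD D" "\<forall>I\<in>G. I \<subseteq> J"
  shows "(\<Sum>I\<in>G. a I * measure M I) \<le> A * measure M J"
proof -
  have nn: "\<forall>I\<in>G. 0 \<le> a I * measure M I" using G a_nonneg by auto
  have "(\<Sum>I\<in>G. ennreal (\<bar>a I\<bar> * measure M I)) = (\<Sum>I\<in>G. ennreal (a I * measure M I))"
    by (rule sum.cong) (use G a_nonneg in auto)
  also have "\<dots> = ennreal (\<Sum>I\<in>G. a I * measure M I)"
    using nn by (subst sum_ennreal) auto
  finally have "ennreal (\<Sum>I\<in>G. a I * measure M I) = (\<Sum>I\<in>G. ennreal (\<bar>a I\<bar> * measure M I))" by simp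
  also have "\<dots> = (\<integral>\<^sup>+ I. ennreal (\<bar>a I\<bar> * measure M I) \<partial>count_space G)"
    using G by (simp add: nn_integral_count_space_finite)
  also have "\<dots> \<le> (\<integral>\<^sup>+ I. ennreal (\<bar>a I\<bar> * measure M I) \<partial>count_space {I\<in>DD D. I \<subseteq> J})"
    using G
    by (subst (1 2) nn_integral_count_space_indicator) (auto intro!: nn_integral_mono split: split_indicator)
  finally have le1: "ennreal (\<Sum>I\<in>G. a I * measure M I) \<le> (\<integral>\<^sup>+ I. ennreal (\<bar>a I\<bar> * measure M I) \<partial>count_space {I\<in>DD D. I \<subseteq> J})" .
  define q where "q = (\<integral>\<^sup>+ I. ennreal (\<bar>a I\<bar> * measure M I) \<partial>count_space {I\<in>DD D. I \<subseteq> J})"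
  have "q / emeasure M J \<le> carl_norm M D a"
    unfolding carl_norm_def q_def using J by (intro SUP_upper) auto
  then have "q / emeasure M J * emeasure M J \<le> carl_norm M D a * emeasure M J"
    by (rule mult_right_mono) simp
  moreover have "q / emeasure M J * emeasure M J = q"
    using DD_pos[OF J] DD_fin[OF J] by (simp add: ennreal_divide_times divide_eq_1_ennreal)
  ultimately have "q \<le> carl_norm M D a * emeasure M J" by simp
  also have "\<dots> = ennreal (A * measure M J)"
    using carl_eq DD_emeasure[OF J] A_nonneg by (simp add: ennreal_mult)
  finally have "ennreal (\<Sum>I\<in>G. a I * measure M I) \<le> ennreal (A * measure M J)"
    using le1 unfolding q_def by simp
  then show ?thesis using A_nonneg by (simp add: ennreal_le_iff)
qed

lemma carl_union:
  assumes G: "finite G" "G \<subseteq> DD D"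
  shows "(\<Sum>I\<in>G. a I * measure M I) \<le> A * measure M (\<Union>G)"
proof -
  have "(\<Sum>I\<in>G. a I * measure M I) = (\<Sum>L\<in>maxels G. \<Sum>I\<in>{I\<in>G. I \<subseteq> L}. a I * measure M I)"
    by (rule sum_maxels[OF G])
  also have "\<dots> \<le> (\<Sum>L\<in>maxels G. A * measure M L)"
    using G maxels_sub by (intro sum_mono carl_fin) (auto intro: finite_subset)
  also have "\<dots> = A * measure M (\<Union>L\<in>maxels G. L)"
  proof -
    have fM: "finite (maxels G)" using finite_subset[OF maxels_sub G(1)] .
    have MD: "\<forall>L\<in>maxels G. L \<in> DD D" using G(2) maxels_sub by blast
    have "measure M (\<Union>L\<in>maxels G. L) = (\<Sum>L\<in>maxels G. measure M L)"
    proof (rule measure_finite_Union[OF fM])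
      show "(\<lambda>L. L) ` maxels G \<subseteq> sets M" using MD DD_sets by blast
      show "disjoint_family_on (\<lambda>L. L) (maxels G)" using maxels_disjoint_family[OF G(2)] .
      fix L assume "L \<in> maxels G"
      then have "L \<in> DD D" using MD by blast
      then show "emeasure M L \<noteq> \<infinity>" using DD_fin[of L] by simp
    qed
    then show ?thesis by (simp add: sum_distrib_left)
  qed
  also have "\<dots> = A * measure M (\<Union>G)" using Union_maxels[OF G(1)] by simp
  finally show ?thesis .
qed

end


context th
begin

definition hh :: "'a set set \<Rightarrow> ('a set \<Rightarrow> real) \<Rightarrow> 'a \<Rightarrow> real" where
  "hh G v x = Max ((\<lambda>I. v I * indicator I x) ` insert {} G)"

lemma hh_ge: "finite G \<Longrightarrow> I \<in> insert {} G \<Longrightarrow> v I * indicator I x \<le> hh G v x"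
  unfolding hh_def by (intro Max_ge) auto

lemma hh_nonneg: "finite G \<Longrightarrow> 0 \<le> hh G v x"
  using hh_ge[of G "{}" v x] by simp

lemma hh_in: "finite G \<Longrightarrow> \<exists>I\<in>insert {} G. hh G v x = v I * indicator I x"
proof -
  assume "finite G"
  then have "hh G v x \<in> (\<lambda>I. v I * indicator I x) ` insert {} G"
    unfolding hh_def by (intro Max_in) auto
  then show ?thesis by auto
qed

lemma hh_meas: "finite G \<Longrightarrow> G \<subseteq> sets M \<Longrightarrow> hh G v \<in> borel_measurable M"
  unfolding hh_def by (intro borel_measurable_Max) auto

lemma T1gen:
  "finite G \<Longrightarrow> G \<subseteq> DD D \<Longrightarrow> \<forall>I\<in>G. 0 \<le> v I \<Longrightarrow>
   ennreal (\<Sum>I\<in>G. a I * measure M I * v I) \<le> ennreal A * (\<integral>\<^sup>+ x. ennreal (hh G v x) \<partial>M)"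
proof (induction "card G" arbitrary: G v rule: less_induct)
  case less
  show ?case
  proof (cases "G = {}")
    case True then show ?thesis by simp
  next
    case False
    have "Min (v ` G) \<in> v ` G" using less(2) False by (intro Min_in) auto
    then obtain I0 where I0a: "I0 \<in> G" "v I0 = Min (v ` G)" by auto
    have I0: "I0 \<in> G" "\<forall>I\<in>G. v I0 \<le> v I" using I0a less(2) by auto
    define m where "m = v I0"
    define G' where "G' = G - {I0}"
    define v' where "v' I = v I - m" for I
    have m0: "0 \<le> m" using less(4) I0 unfolding m_def by auto
    have fG': "finite G'" using less(2) unfolding G'_def by simp
    have G'D: "G' \<subseteq> DD D" using less(3) unfolding G'_def by auto
    have v'0: "\<forall>I\<in>G'. 0 \<le> v' I" using I0 unfolding v'_def m_def G'_def by auto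
    have cG': "card G' < card G" unfolding G'_def by (rule card_Diff1_less[OF less(2) I0(1)])
    have IH: "ennreal (\<Sum>I\<in>G'. a I * measure M I * v' I) \<le> ennreal A * (\<integral>\<^sup>+ x. ennreal (hh G' v' x) \<partial>M)"
      using less(1)[OF cG' fG' G'D v'0] .
    have GM: "G \<subseteq> sets M" using less(3) DD_sets by blast
    have UG: "\<Union>G \<in> sets M" using GM less(2) by blast
    have nnG: "\<forall>I\<in>G. 0 \<le> a I * measure M I" using less(3) a_nonneg by auto
    have s1: "(\<Sum>I\<in>G. a I * measure M I * v I) = m * (\<Sum>I\<in>G. a I * measure M I) + (\<Sum>I\<in>G'. a I * measure M I * v' I)"
    proof -
      have "(\<Sum>I\<in>G. a I * measure M I * v I) = (\<Sum>I\<in>G. m * (a I * measure M I) + a I * measure M I * v' I)"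
        unfolding v'_def by (intro sum.cong) (auto simp: algebra_simps)
      also have "\<dots> = m * (\<Sum>I\<in>G. a I * measure M I) + (\<Sum>I\<in>G. a I * measure M I * v' I)"
        by (simp add: sum.distrib sum_distrib_left)
      also have "(\<Sum>I\<in>G. a I * measure M I * v' I) = a I0 * measure M I0 * v' I0 + (\<Sum>I\<in>G'. a I * measure M I * v' I)"
        unfolding G'_def using less(2) I0(1) by (simp add: sum.remove)
      also have "v' I0 = 0" unfolding v'_def m_def by simp
      finally show ?thesis by simp
    qed
    have s2: "m * (\<Sum>I\<in>G. a I * measure M I) \<le> m * (A * measure M (\<Union>G))"
      using carl_union[OF less(2,3)] m0 by (rule mult_left_mono)
    have nn1: "0 \<le> m * (\<Sum>I\<in>G. a I * measure M I)" using m0 nnG by (simp add: sum_nonneg)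
    have nn2: "0 \<le> (\<Sum>I\<in>G'. a I * measure M I * v' I)"
      using v'0 nnG unfolding G'_def by (intro sum_nonneg) auto
    have pw: "m * indicator (\<Union>G) x + hh G' v' x \<le> hh G v x" for x
    proof -
      obtain J where J: "J \<in> insert {} G'" "hh G' v' x = v' J * indicator J x"
        using hh_in[OF fG'] by blast
      show ?thesis
      proof (cases "x \<in> J")
        case True
        then have "J \<in> G'" "J \<noteq> {}" using J by auto
        then have "J \<in> G" unfolding G'_def by simp
        then have "x \<in> \<Union>G" using True by blast
        have "v J * indicator J x \<le> hh G v x" using hh_ge[OF less(2)] \<open>J \<in> G\<close> by blast
        then show ?thesis using J True \<open>x \<in> \<Union>G\<close> unfolding v'_def by simp
      next
        case False
        then have h0: "hh G' v' x = 0" using J by simp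
        show ?thesis
        proof (cases "x \<in> \<Union>G")
          case True
          then obtain K where "K \<in> G" "x \<in> K" by blast
          then have "v K \<le> hh G v x" using hh_ge[OF less(2), of K v x] by simp
          moreover have "m \<le> v K" using I0 \<open>K \<in> G\<close> unfolding m_def by auto
          ultimately show ?thesis using h0 True by simp
        next
          case False
          then show ?thesis using h0 hh_nonneg[OF less(2)] by simp
        qed
      qed
    qed
    have "ennreal (\<Sum>I\<in>G. a I * measure M I * v I)
        \<le> ennreal (m * (A * measure M (\<Union>G))) + ennreal (\<Sum>I\<in>G'. a I * measure M I * v' I)"
    proof -
      have "(\<Sum>I\<in>G. a I * measure M I * v I) \<le> m * (A * measure M (\<Union>G)) + (\<Sum>I\<in>G'. a I * measure M I * v' I)"
        using s1 s2 by linarith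
      then have "ennreal (\<Sum>I\<in>G. a I * measure M I * v I) \<le> ennreal (m * (A * measure M (\<Union>G)) + (\<Sum>I\<in>G'. a I * measure M I * v' I))"
        by (rule ennreal_leI)
      also have "\<dots> = ennreal (m * (A * measure M (\<Union>G))) + ennreal (\<Sum>I\<in>G'. a I * measure M I * v' I)"
        using m0 A_nonneg nn2 by (intro ennreal_plus) auto
      finally show ?thesis .
    qed
    also have "\<dots> \<le> ennreal A * (ennreal m * emeasure M (\<Union>G)) + ennreal A * (\<integral>\<^sup>+ x. ennreal (hh G' v' x) \<partial>M)"
    proof (rule add_mono)
      show "ennreal (m * (A * measure M (\<Union>G))) \<le> ennreal A * (ennreal m * emeasure M (\<Union>G))"
      proof -
        have "ennreal (m * (A * measure M (\<Union>G))) = ennreal A * (ennreal m * ennreal (measure M (\<Union>G)))"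
          using m0 A_nonneg by (simp add: ennreal_mult' ac_simps)
        also have "\<dots> \<le> ennreal A * (ennreal m * emeasure M (\<Union>G))"
          by (intro mult_left_mono ennreal_measure_le) auto
        finally show ?thesis .
      qed
    qed (rule IH)
    also have "\<dots> = ennreal A * ((\<integral>\<^sup>+ x. ennreal m * indicator (\<Union>G) x \<partial>M) + (\<integral>\<^sup>+ x. ennreal (hh G' v' x) \<partial>M))"
      using UG by (simp add: nn_integral_cmult_indicator distrib_left)
    also have "\<dots> = ennreal A * (\<integral>\<^sup>+ x. ennreal m * indicator (\<Union>G) x + ennreal (hh G' v' x) \<partial>M)"
    proof -
      have hm: "hh G' v' \<in> borel_measurable M" by (rule hh_meas[OF fG']) (use G'D DD_sets in blast)
      have hm2: "(\<lambda>x. ennreal (hh G' v' x)) \<in> borel_measurable M"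
        using measurable_compose[OF hm measurable_ennreal] by (simp add: comp_def)
      show ?thesis using UG hm2 by (subst nn_integral_add) auto
    qed
    also have "\<dots> \<le> ennreal A * (\<integral>\<^sup>+ x. ennreal (hh G v x) \<partial>M)"
    proof (intro mult_left_mono nn_integral_mono)
      fix x
      have "ennreal m * indicator (\<Union>G) x + ennreal (hh G' v' x) = ennreal (m * indicator (\<Union>G) x + hh G' v' x)"
        using m0 hh_nonneg[OF fG'] by (simp add: ennreal_mult ennreal_indicator)
      also have "\<dots> \<le> ennreal (hh G v x)" using pw by (simp add: ennreal_leI)
      finally show "ennreal m * indicator (\<Union>G) x + ennreal (hh G' v' x) \<le> ennreal (hh G v x)" .
    qed simp
    finally show ?thesis .
  qed
qed

end


context th
begin

lemma W_nonneg: "S \<in> sets M \<Longrightarrow> 0 \<le> W S"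
  unfolding W_def set_lebesgue_integral_def
  by (rule integral_nonneg_AE, rule AE_I2) (use u_nonneg in \<open>auto split: split_indicator\<close>)

lemma W_int: "I \<in> DD D \<Longrightarrow> integrable M (\<lambda>y. indicator I y * u y)"
  using u_loc_int unfolding set_integrable_def by auto

lemma W_sub_int: "J \<in> DD D \<Longrightarrow> S \<in> sets M \<Longrightarrow> S \<subseteq> J \<Longrightarrow> set_integrable M S u"
  by (rule set_integrable_subset[OF bspec[OF u_loc_int]])

lemma W_nn: assumes "I \<in> DD D" shows "(\<integral>\<^sup>+ y. ennreal (u y) * indicator I y \<partial>M) = ennreal (W I)"
proof -
  have "(\<integral>\<^sup>+ y. ennreal (u y) * indicator I y \<partial>M) = (\<integral>\<^sup>+ y. ennreal (indicator I y * u y) \<partial>M)"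
    by (intro nn_integral_cong) (auto split: split_indicator)
  also have "\<dots> = ennreal (integral\<^sup>L M (\<lambda>y. indicator I y * u y))"
    by (rule nn_integral_eq_integral[OF W_int[OF assms]], rule AE_I2) (use u_nonneg in \<open>auto split: split_indicator\<close>)
  also have "integral\<^sup>L M (\<lambda>y. indicator I y * u y) = W I"
    unfolding W_def set_lebesgue_integral_def by simp
  finally show ?thesis .
qed

lemma avg_u: "avg M I u = W I / measure M I"
  unfolding avg_def W_def by simp

lemma avg_nonneg: "I \<in> DD D \<Longrightarrow> 0 \<le> avg M I u"
  unfolding avg_u using W_nonneg[OF DD_sets] DD_measure_pos by (simp add: less_imp_le)

lemma maxf_ge:
  assumes I: "I \<in> DD D" and IL: "I \<subseteq> L" and x: "x \<in> I"
  shows "ennreal (avg M I u) \<le> maxf M D (\<lambda>y. indicator L y * u y) x"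
proof -
  have "(\<integral>\<^sup>+ y. ennreal \<bar>indicator L y * u y\<bar> * indicator I y \<partial>M) = (\<integral>\<^sup>+ y. ennreal (u y) * indicator I y \<partial>M)"
  proof (intro nn_integral_cong)
    fix y assume "y \<in> space M"
    then show "ennreal \<bar>indicator L y * u y\<bar> * indicator I y = ennreal (u y) * indicator I y"
      using u_nonneg IL by (auto split: split_indicator)
  qed
  also have "\<dots> = ennreal (W I)" by (rule W_nn[OF I])
  finally have e: "(\<integral>\<^sup>+ y. ennreal \<bar>indicator L y * u y\<bar> * indicator I y \<partial>M) = ennreal (W I)" .
  have "ennreal (avg M I u) = ennreal (W I) / emeasure M I"
    unfolding avg_u DD_emeasure[OF I]
    using W_nonneg[OF DD_sets[OF I]] DD_measure_pos[OF I] by (simp add: divide_ennreal)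
  also have "\<dots> = (\<integral>\<^sup>+ y. ennreal \<bar>indicator L y * u y\<bar> * indicator I y \<partial>M) / emeasure M I"
    using e by simp
  also have "\<dots> \<le> maxf M D (\<lambda>y. indicator L y * u y) x"
    unfolding maxf_def using I x by (intro SUP_upper) auto
  finally show ?thesis .
qed

lemma T1:
  assumes L: "L \<in> DD D" and G: "finite G" "G \<subseteq> DD D" "\<forall>I\<in>G. I \<subseteq> L"
  shows "ennreal (\<Sum>I\<in>G. a I * W I) \<le> ennreal A * (\<integral>\<^sup>+ x\<in>L. maxf M D (\<lambda>y. indicator L y * u y) x \<partial>M)"
proof -
  define v where "v I = avg M I u" for I
  have v0: "\<forall>I\<in>G. 0 \<le> v I" using G avg_nonneg unfolding v_def by auto
  have "(\<Sum>I\<in>G. a I * W I) = (\<Sum>I\<in>G. a I * measure M I * v I)"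
  proof (intro sum.cong refl)
    fix I assume "I \<in> G"
    then have "0 < measure M I" using G DD_measure_pos by auto
    then show "a I * W I = a I * measure M I * v I" unfolding v_def avg_u by simp
  qed
  then have "ennreal (\<Sum>I\<in>G. a I * W I) \<le> ennreal A * (\<integral>\<^sup>+ x. ennreal (hh G v x) \<partial>M)"
    using T1gen[OF G(1,2) v0] by simp
  also have "\<dots> \<le> ennreal A * (\<integral>\<^sup>+ x\<in>L. maxf M D (\<lambda>y. indicator L y * u y) x \<partial>M)"
  proof (intro mult_left_mono nn_integral_mono)
    fix x
    obtain J where J: "J \<in> insert {} G" "hh G v x = v J * indicator J x"
      using hh_in[OF G(1)] by blast
    show "ennreal (hh G v x) \<le> maxf M D (\<lambda>y. indicator L y * u y) x * indicator L x"
    proof (cases "x \<in> J")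
      case True
      then have "J \<in> G" using J by auto
      then have "J \<in> DD D" "J \<subseteq> L" using G by auto
      then have "ennreal (v J) \<le> maxf M D (\<lambda>y. indicator L y * u y) x"
        unfolding v_def using maxf_ge True by blast
      then show ?thesis using J True \<open>J \<subseteq> L\<close> by auto
    next
      case False then show ?thesis using J by simp
    qed
  qed simp
  finally show ?thesis .
qed

lemma ustar_mult:
  assumes I: "I \<in> DD D"
  shows "ustar M D u I * emeasure M I = (\<integral>\<^sup>+ x\<in>I. maxf M D (\<lambda>y. indicator I y * u y) x \<partial>M)"
  unfolding ustar_def using DD_pos[OF I] DD_fin[OF I]
  by (simp add: ennreal_divide_times divide_eq_1_ennreal)

lemma ustar_ge:
  assumes I: "I \<in> DD D"
  shows "ennreal (avg M I u) \<le> ustar M D u I"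
proof -
  have "(\<integral>\<^sup>+ x. ennreal (avg M I u) * indicator I x \<partial>M) \<le> (\<integral>\<^sup>+ x\<in>I. maxf M D (\<lambda>y. indicator I y * u y) x \<partial>M)"
  proof (intro nn_integral_mono)
    fix x
    show "ennreal (avg M I u) * indicator I x \<le> maxf M D (\<lambda>y. indicator I y * u y) x * indicator I x"
      using maxf_ge[OF I subset_refl, of x] by (auto split: split_indicator)
  qed
  then have "ennreal (avg M I u) * emeasure M I \<le> (\<integral>\<^sup>+ x\<in>I. maxf M D (\<lambda>y. indicator I y * u y) x \<partial>M)"
    using DD_sets[OF I] by (simp add: nn_integral_cmult_indicator)
  then have "ennreal (avg M I u) * emeasure M I / emeasure M I \<le> ustar M D u I"
    unfolding ustar_def by (rule divide_right_mono_ennreal)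
  then show ?thesis using DD_pos[OF I] DD_fin[OF I] by (simp add: mult_divide_eq_ennreal)
qed

definition good :: "'a set \<Rightarrow> bool" where
  "good I \<longleftrightarrow> I \<in> DD D \<and> ustar M D u I \<noteq> \<infinity> \<and> avg M I u \<noteq> 0"

definition "us I = enn2real (ustar M D u I)"
definition "r I = us I / avg M I u"

lemma good_facts:
  assumes g: "good I"
  shows "I \<in> DD D" "0 < avg M I u" "0 < W I" "avg M I u \<le> us I" "1 \<le> r I"
    "us I * measure M I = r I * W I"
    "ennreal (us I * measure M I) = (\<integral>\<^sup>+ x\<in>I. maxf M D (\<lambda>y. indicator I y * u y) x \<partial>M)"
    "0 < us I"
proof -
  show I: "I \<in> DD D" using g unfolding good_def by simp
  show av: "0 < avg M I u" using g avg_nonneg[OF I] unfolding good_def by auto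
  have mp: "0 < measure M I" using DD_measure_pos[OF I] .
  show W: "0 < W I" using av mp unfolding avg_u by (simp add: zero_less_divide_iff)
  have ufin: "ustar M D u I = ennreal (us I)"
    using g unfolding good_def us_def by (simp add: less_top[symmetric])
  have us0: "0 \<le> us I" unfolding us_def by simp
  have "ennreal (avg M I u) \<le> ennreal (us I)" using ustar_ge[OF I] unfolding ufin .
  then show au: "avg M I u \<le> us I" using us0 by simp
  show "1 \<le> r I" unfolding r_def using au av by simp
  show "0 < us I" using au av by simp
  have "r I * W I = us I / (W I / measure M I) * W I" unfolding r_def avg_u ..
  also have "\<dots> = us I * measure M I" using mp W by (simp add: field_simps)
  finally show "us I * measure M I = r I * W I" by simp
  have "ennreal (us I * measure M I) = ennreal (us I) * ennreal (measure M I)"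
    by (rule ennreal_mult) (use au av mp in auto)
  also have "\<dots> = ustar M D u I * emeasure M I" using ufin DD_emeasure[OF I] by simp
  also have "\<dots> = (\<integral>\<^sup>+ x\<in>I. maxf M D (\<lambda>y. indicator I y * u y) x \<partial>M)" by (rule ustar_mult[OF I])
  finally show "ennreal (us I * measure M I) = (\<integral>\<^sup>+ x\<in>I. maxf M D (\<lambda>y. indicator I y * u y) x \<partial>M)" .
qed

lemma W_mono:
  assumes J: "J \<in> DD D" and S: "S \<in> sets M" "S \<subseteq> J"
  shows "W S \<le> W J"
proof -
  have i1: "integrable M (\<lambda>x. indicator S x * u x)"
    using W_sub_int[OF J S] unfolding set_integrable_def by simp
  show ?thesis unfolding W_def set_lebesgue_integral_def
    using i1 W_int[OF J] u_nonneg S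
    by (simp, intro integral_mono) (auto split: split_indicator)
qed

lemma L1:
  assumes J: "J \<in> DD D" and F0: "finite F0" "\<forall>I\<in>F0. good I" and t: "1 \<le> t"
  shows "(\<Sum>I\<in>{I\<in>F0. I \<subseteq> J \<and> r I \<le> t}. a I * W I) \<le> t * (A * W J)"
proof -
  define S where "S = {I\<in>F0. I \<subseteq> J \<and> r I \<le> t}"
  have fS: "finite S" using F0 unfolding S_def by simp
  have SD: "S \<subseteq> DD D" using F0 good_facts(1) unfolding S_def by auto
  have fM: "finite (maxels S)" using finite_subset[OF maxels_sub fS] .
  have MS: "\<forall>L\<in>maxels S. L \<in> S" using maxels_sub by blast
  have "(\<Sum>I\<in>S. a I * W I) = (\<Sum>L\<in>maxels S. \<Sum>I\<in>{I\<in>S. I \<subseteq> L}. a I * W I)"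
    by (rule sum_maxels[OF fS SD])
  also have "\<dots> \<le> (\<Sum>L\<in>maxels S. t * A * W L)"
  proof (rule sum_mono)
    fix L assume "L \<in> maxels S"
    then have LS: "L \<in> S" using MS by blast
    then have LF: "L \<in> F0" and rL: "r L \<le> t" by (simp_all add: S_def)
    then have gL: "good L" using F0(2) by blast
    have LD: "L \<in> DD D" using good_facts(1)[OF gL] .
    have "ennreal (\<Sum>I\<in>{I\<in>S. I \<subseteq> L}. a I * W I) \<le> ennreal A * (\<integral>\<^sup>+ x\<in>L. maxf M D (\<lambda>y. indicator L y * u y) x \<partial>M)"
    proof (rule T1[OF LD])
      show "finite {I\<in>S. I \<subseteq> L}" using fS by simp
      show "{I\<in>S. I \<subseteq> L} \<subseteq> DD D" using SD by blast
      show "\<forall>I\<in>{I\<in>S. I \<subseteq> L}. I \<subseteq> L" by blast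
    qed
    also have "\<dots> = ennreal A * ennreal (us L * measure M L)"
      by (simp only: good_facts(7)[OF gL])
    also have "\<dots> = ennreal (A * (us L * measure M L))"
      by (rule ennreal_mult[symmetric]) (use A_nonneg good_facts(8)[OF gL] DD_measure_pos[OF LD] in auto)
    finally have le: "ennreal (\<Sum>I\<in>{I\<in>S. I \<subseteq> L}. a I * W I) \<le> ennreal (A * (us L * measure M L))" .
    have "0 \<le> A * (us L * measure M L)"
      using A_nonneg good_facts(8)[OF gL] DD_measure_pos[OF LD] by simp
    then have "(\<Sum>I\<in>{I\<in>S. I \<subseteq> L}. a I * W I) \<le> A * (us L * measure M L)"
      using le by (simp only: ennreal_le_iff)
    also have "\<dots> = A * (r L * W L)" using good_facts(6)[OF gL] by simp
    also have "\<dots> \<le> A * (t * W L)"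
      using rL good_facts(3)[OF gL] A_nonneg by (intro mult_left_mono mult_right_mono) auto
    finally show "(\<Sum>I\<in>{I\<in>S. I \<subseteq> L}. a I * W I) \<le> t * A * W L" by (simp add: ac_simps)
  qed
  also have "\<dots> = t * A * W (\<Union>L\<in>maxels S. L)"
  proof -
    have "W (\<Union>L\<in>maxels S. L) = (\<Sum>L\<in>maxels S. W L)"
      unfolding W_def
    proof (rule set_integral_finite_Union[OF fM])
      show "disjoint_family_on (\<lambda>L. L) (maxels S)" using maxels_disjoint_family[OF SD] .
      fix L assume "L \<in> maxels S"
      then have "L \<in> DD D" using MS SD by blast
      then show "set_integrable M L u" "L \<in> sets M" using u_loc_int DD_sets by auto
    qed
    then show ?thesis by (simp add: sum_distrib_left)
  qed
  also have "\<dots> \<le> t * A * W J"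
  proof -
    have Usub: "(\<Union>L\<in>maxels S. L) \<subseteq> J"
    proof
      fix x assume "x \<in> (\<Union>L\<in>maxels S. L)"
      then obtain L where "L \<in> maxels S" "x \<in> L" by blast
      then have "L \<in> S" using MS by blast
      then have "L \<subseteq> J" unfolding S_def by simp
      then show "x \<in> J" using \<open>x \<in> L\<close> by blast
    qed
    have Usets: "(\<Union>L\<in>maxels S. L) \<in> sets M"
    proof (rule sets.finite_UN[OF fM])
      fix L assume "L \<in> maxels S"
      then have "L \<in> DD D" using MS SD by blast
      then show "L \<in> sets M" by (rule DD_sets)
    qed
    have "W (\<Union>L\<in>maxels S. L) \<le> W J" by (rule W_mono[OF J Usets Usub])
    moreover have "0 \<le> t * A" using t A_nonneg by simp
    ultimately show ?thesis by (rule mult_left_mono)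
  qed
  finally show ?thesis unfolding S_def by (simp add: ac_simps)
qed

definition "Calpha = 1/\<alpha> 1 + (LINT t:{1..}|lborel. 1/(t * \<alpha> t))"

lemma step7:
  assumes J: "J \<in> DD D" and F0: "finite F0" "\<forall>I\<in>F0. good I"
  shows "(\<Sum>I\<in>{I\<in>F0. I \<subseteq> J}. a I * W I * (1/(r I * \<alpha> (r I)))) \<le> (A * W J) * Calpha"
  unfolding Calpha_def
proof (rule abel[OF alpha_pos alpha_mono alpha_int])
  show "finite {I\<in>F0. I \<subseteq> J}" using F0 by simp
  show "\<forall>i\<in>{I\<in>F0. I \<subseteq> J}. 1 \<le> r i" using F0 good_facts(5) by auto
  show "\<forall>i\<in>{I\<in>F0. I \<subseteq> J}. 0 \<le> a i * W i"
  proof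
    fix i assume "i \<in> {I\<in>F0. I \<subseteq> J}"
    then have g: "good i" using F0 by blast
    have "0 \<le> a i" using a_nonneg good_facts(1)[OF g] by blast
    moreover have "0 \<le> W i" using good_facts(3)[OF g] by simp
    ultimately show "0 \<le> a i * W i" by simp
  qed
  show "0 \<le> A * W J" using A_nonneg W_nonneg[OF DD_sets[OF J]] by simp
  show "\<forall>t\<ge>1. (\<Sum>i\<in>{i\<in>{I\<in>F0. I \<subseteq> J}. r i \<le> t}. a i * W i) \<le> A * W J * t"
  proof (intro allI impI)
    fix t :: real assume "1 \<le> t"
    have "{i\<in>{I\<in>F0. I \<subseteq> J}. r i \<le> t} = {I\<in>F0. I \<subseteq> J \<and> r I \<le> t}" by auto
    then show "(\<Sum>i\<in>{i\<in>{I\<in>F0. I \<subseteq> J}. r i \<le> t}. a i * W i) \<le> A * W J * t"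
      using L1[OF J F0 \<open>1 \<le> t\<close>] by (simp add: ac_simps)
  qed
qed

end


lemma bell_arith:
  fixes W c m y :: real
  assumes "0 < W" "0 \<le> c" "c \<le> m" "m \<le> W"
  shows "c * (y / W)^2 \<le> 4 * y^2 / (W + m - c) - 4 * y^2 / (W + m)"
proof -
  define P where "P = W + m - c"
  define Q where "Q = W + m"
  have P0: "0 < P" "P \<le> 2 * W" using assms unfolding P_def by auto
  have Q0: "0 < Q" "Q \<le> 2 * W" using assms unfolding Q_def by auto
  have PQ: "P * Q \<le> 4 * W^2"
  proof -
    have "P * Q \<le> (2 * W) * (2 * W)" using P0 Q0 by (intro mult_mono) auto
    then show ?thesis by (simp add: power2_eq_square)
  qed
  have PQ0: "0 < P * Q" using P0 Q0 by simp
  have e1: "4 * y^2 / P - 4 * y^2 / Q = 4 * y^2 * c / (P * Q)"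
    using P0 Q0 unfolding P_def Q_def by (simp add: field_simps)
  have e2: "c * (y / W)^2 = 4 * y^2 * c / (4 * W^2)"
    using assms by (simp add: power_divide)
  have "4 * y^2 * c / (4 * W^2) \<le> 4 * y^2 * c / (P * Q)"
    using PQ PQ0 assms by (intro divide_left_mono) auto
  then show ?thesis using e1 e2 unfolding P_def Q_def by simp
qed

context th
begin

definition "Y S = (LINT x:S|M. f x * u x)"
definition "X S = (LINT x:S|M. (f x)^2 * u x)"
definition "Xtot = integral\<^sup>L M (\<lambda>x. (f x)^2 * u x)"

lemma f2u_int: "integrable M (\<lambda>x. (f x)^2 * u x)"
proof (rule integrableI_nonneg)
  show "(\<lambda>x. (f x)^2 * u x) \<in> borel_measurable M" using f_meas u_meas by measurable
  show "AE x in M. 0 \<le> (f x)^2 * u x" by (rule AE_I2) (use u_nonneg in simp)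
  show "(\<integral>\<^sup>+ x. ennreal ((f x)^2 * u x) \<partial>M) < \<infinity>" using f_L2 by simp
qed

lemma X_int: "S \<in> sets M \<Longrightarrow> set_integrable M S (\<lambda>x. (f x)^2 * u x)"
  unfolding set_integrable_def by (rule integrable_mult_indicator[OF _ f2u_int])

lemma Y_int_DD:
  assumes J: "J \<in> DD D" shows "set_integrable M J (\<lambda>x. f x * u x)"
  unfolding set_integrable_def
proof (rule Bochner_Integration.integrable_bound)
  show "integrable M (\<lambda>x. indicator J x *\<^sub>R ((f x)^2 * u x) + indicator J x *\<^sub>R u x)"
    using X_int[OF DD_sets[OF J]] u_loc_int J unfolding set_integrable_def by auto
  show "(\<lambda>x. indicator J x *\<^sub>R (f x * u x)) \<in> borel_measurable M"
    using f_meas u_meas DD_sets[OF J] by measurable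
  show "AE x in M. norm (indicator J x *\<^sub>R (f x * u x)) \<le> norm (indicator J x *\<^sub>R ((f x)^2 * u x) + indicator J x *\<^sub>R u x)"
  proof (rule AE_I2)
    fix x assume x: "x \<in> space M"
    have u0: "0 \<le> u x" using u_nonneg x by simp
    have fb: "\<bar>f x\<bar> \<le> (f x)^2 + 1"
    proof (cases "\<bar>f x\<bar> \<le> 1")
      case True then show ?thesis by (simp add: add_increasing)
    next
      case False
      then have "1 * \<bar>f x\<bar> \<le> \<bar>f x\<bar> * \<bar>f x\<bar>" by (intro mult_right_mono) auto
      also have "\<bar>f x\<bar> * \<bar>f x\<bar> = (f x)^2" by (simp add: power2_eq_square abs_mult_self_eq)
      finally show ?thesis by simp
    qed
    have "\<bar>f x * u x\<bar> \<le> (f x)^2 * u x + u x"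
    proof -
      have "\<bar>f x * u x\<bar> = \<bar>f x\<bar> * u x" using u0 by (simp add: abs_mult)
      also have "\<dots> \<le> ((f x)^2 + 1) * u x" using fb u0 by (rule mult_right_mono)
      finally show ?thesis by (simp add: algebra_simps)
    qed
    moreover have "0 \<le> (f x)^2 * u x + u x" using u0 by simp
    ultimately show "norm (indicator J x *\<^sub>R (f x * u x)) \<le> norm (indicator J x *\<^sub>R ((f x)^2 * u x) + indicator J x *\<^sub>R u x)"
      by (auto split: split_indicator)
  qed
qed

lemma Y_int: "J \<in> DD D \<Longrightarrow> S \<in> sets M \<Longrightarrow> S \<subseteq> J \<Longrightarrow> set_integrable M S (\<lambda>x. f x * u x)"
  by (rule set_integrable_subset[OF Y_int_DD])

lemma X_nonneg: "S \<in> sets M \<Longrightarrow> 0 \<le> X S"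
  unfolding X_def set_lebesgue_integral_def
  by (rule integral_nonneg_AE, rule AE_I2) (use u_nonneg in \<open>auto split: split_indicator\<close>)

lemma CS:
  assumes J: "J \<in> DD D" and S: "S \<in> sets M" "S \<subseteq> J"
  shows "(Y S)^2 \<le> X S * W S"
proof -
  have iX: "integrable M (\<lambda>x. indicator S x * ((f x)^2 * u x))"
    using X_int[OF S(1)] unfolding set_integrable_def by simp
  have iY: "integrable M (\<lambda>x. indicator S x * (f x * u x))"
    using Y_int[OF J S] unfolding set_integrable_def by simp
  have iW: "integrable M (\<lambda>x. indicator S x * u x)"
    using W_sub_int[OF J S] unfolding set_integrable_def by simp
  have quad: "0 \<le> X S - 2 * l * Y S + l^2 * W S" for l
  proof -
    have "0 \<le> integral\<^sup>L M (\<lambda>x. indicator S x * ((f x - l)^2 * u x))"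
      by (rule integral_nonneg_AE, rule AE_I2) (use u_nonneg in \<open>auto split: split_indicator\<close>)
    also have "(\<lambda>x. indicator S x * ((f x - l)^2 * u x)) =
        (\<lambda>x. indicator S x * ((f x)^2 * u x) - (2 * l) * (indicator S x * (f x * u x)) + l^2 * (indicator S x * u x))"
      by (rule ext) (simp add: power2_eq_square algebra_simps)
    also have "integral\<^sup>L M \<dots> = X S - 2 * l * Y S + l^2 * W S"
      using iX iY iW unfolding X_def Y_def W_def set_lebesgue_integral_def by simp
    finally show ?thesis .
  qed
  have W0: "0 \<le> W S" by (rule W_nonneg[OF S(1)])
  show ?thesis
  proof (cases "W S = 0")
    case True
    have "Y S = 0"
    proof (rule ccontr)
      assume Yn: "Y S \<noteq> 0"
      have "0 \<le> X S - 2 * ((X S + 1) / (2 * Y S)) * Y S + ((X S + 1) / (2 * Y S))^2 * W S"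
        by (rule quad)
      also have "\<dots> = -1" using Yn True by (simp add: field_simps)
      finally show False by simp
    qed
    then show ?thesis using True by simp
  next
    case False
    then have Wp: "0 < W S" using W0 by simp
    have "0 \<le> X S - 2 * (Y S / W S) * Y S + (Y S / W S)^2 * W S" by (rule quad)
    also have "\<dots> = X S - (Y S)^2 / W S" using Wp by (simp add: field_simps power2_eq_square)
    finally have "(Y S)^2 / W S \<le> X S" by simp
    then show ?thesis using Wp by (simp add: divide_le_eq)
  qed
qed

lemma decomp:
  fixes g :: "'a \<Rightarrow> real"
  assumes J: "J \<in> DD D" and Ch: "finite Ch" "Ch \<subseteq> DD D" "\<forall>K\<in>Ch. K \<subseteq> J" "disjoint_family_on (\<lambda>K. K) Ch"
    and g: "set_integrable M J g"
  shows "(LINT x:J|M. g x) = (LINT x:(J - \<Union>Ch)|M. g x) + (\<Sum>K\<in>Ch. LINT x:K|M. g x)"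
proof -
  have ChM: "\<forall>K\<in>Ch. K \<in> sets M" using Ch DD_sets by blast
  have UM: "(\<Union>K\<in>Ch. K) \<in> sets M" using Ch(1) ChM by blast
  have JM: "J \<in> sets M" using DD_sets[OF J] .
  have eJ: "J = (J - \<Union>Ch) \<union> (\<Union>K\<in>Ch. K)" using Ch(3) by blast
  have "(LINT x:J|M. g x) = (LINT x:((J - \<Union>Ch) \<union> (\<Union>K\<in>Ch. K))|M. g x)"
    using eJ by simp
  also have "\<dots> = (LINT x:(J - \<Union>Ch)|M. g x) + (LINT x:(\<Union>K\<in>Ch. K)|M. g x)"
  proof (rule set_integral_Un)
    show "(J - \<Union>Ch) \<inter> (\<Union>K\<in>Ch. K) = {}" by blast
    show "set_integrable M (J - \<Union>Ch) g"
      by (rule set_integrable_subset[OF g]) (use JM UM in auto)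
    show "set_integrable M (\<Union>K\<in>Ch. K) g"
      by (rule set_integrable_subset[OF g UM]) (use Ch(3) in blast)
  qed
  also have "(LINT x:(\<Union>K\<in>Ch. K)|M. g x) = (\<Sum>K\<in>Ch. LINT x:K|M. g x)"
  proof (rule set_integral_finite_Union[OF Ch(1) Ch(4)])
    fix K assume "K \<in> Ch"
    then show "set_integrable M K g" "K \<in> sets M"
      using set_integrable_subset[OF g] ChM Ch(3) by auto
  qed
  finally show ?thesis .
qed

lemma bellman:
  assumes F: "finite F" "F \<subseteq> DD D" and Wp: "\<forall>I\<in>F. 0 < W I" and c0: "\<forall>I\<in>F. 0 \<le> c I"
    and carl: "\<forall>J\<in>F. (\<Sum>I\<in>{I\<in>F. I \<subseteq> J}. c I) \<le> W J"
  shows "J \<in> F \<Longrightarrow> (\<Sum>I\<in>{I\<in>F. I \<subseteq> J}. c I * (Y I / W I)^2)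
            \<le> 4 * (X J - (Y J)^2 / (W J + (\<Sum>I\<in>{I\<in>F. I \<subseteq> J}. c I)))"
proof (induction "card {I\<in>F. I \<subseteq> J}" arbitrary: J rule: less_induct)
  case less
  define m where "m K = (\<Sum>I\<in>{I\<in>F. I \<subseteq> K}. c I)" for K
  define g where "g I = c I * (Y I / W I)^2" for I
  define Sub where "Sub = {I\<in>F. I \<subseteq> J \<and> I \<noteq> J}"
  define Ch where "Ch = maxels Sub"
  have JF: "J \<in> F" by (rule less.prems)
  have JD: "J \<in> DD D" using JF F by blast
  have fSub: "finite Sub" using F unfolding Sub_def by simp
  have SubD: "Sub \<subseteq> DD D" using F unfolding Sub_def by blast
  have fCh: "finite Ch" unfolding Ch_def using finite_subset[OF maxels_sub fSub] .
  have ChSub: "Ch \<subseteq> Sub" unfolding Ch_def by (rule maxels_sub)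
  have ChF: "\<forall>K\<in>Ch. K \<in> F \<and> K \<subseteq> J \<and> K \<noteq> J" using ChSub unfolding Sub_def by blast
  have ChD: "Ch \<subseteq> DD D" using ChSub SubD by blast
  have disjCh: "disjoint_family_on (\<lambda>K. K) Ch" unfolding Ch_def by (rule maxels_disjoint_family[OF SubD])
  have e1: "{I\<in>F. I \<subseteq> J} = insert J Sub" "J \<notin> Sub" using JF unfolding Sub_def by auto
  have e2: "{I\<in>Sub. I \<subseteq> K} = {I\<in>F. I \<subseteq> K}" if "K \<in> Ch" for K
  proof -
    have K: "K \<in> F" "K \<subseteq> J" "K \<noteq> J" using ChF that by auto
    show ?thesis
    proof
      show "{I\<in>Sub. I \<subseteq> K} \<subseteq> {I\<in>F. I \<subseteq> K}" unfolding Sub_def by blast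
      show "{I\<in>F. I \<subseteq> K} \<subseteq> {I\<in>Sub. I \<subseteq> K}"
      proof
        fix I assume I: "I \<in> {I\<in>F. I \<subseteq> K}"
        then have "I \<subseteq> J" using K by blast
        moreover have "I \<noteq> J" using I K by blast
        ultimately show "I \<in> {I\<in>Sub. I \<subseteq> K}" using I unfolding Sub_def by blast
      qed
    qed
  qed
  have split: "(\<Sum>I\<in>{I\<in>F. I \<subseteq> J}. h I) = h J + (\<Sum>K\<in>Ch. \<Sum>I\<in>{I\<in>F. I \<subseteq> K}. h I)" for h :: "'a set \<Rightarrow> real"
  proof -
    have "(\<Sum>I\<in>{I\<in>F. I \<subseteq> J}. h I) = h J + (\<Sum>I\<in>Sub. h I)"
      unfolding e1(1) using fSub e1(2) by simp
    also have "(\<Sum>I\<in>Sub. h I) = (\<Sum>K\<in>Ch. \<Sum>I\<in>{I\<in>Sub. I \<subseteq> K}. h I)"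
      unfolding Ch_def by (rule sum_maxels[OF fSub SubD])
    also have "\<dots> = (\<Sum>K\<in>Ch. \<Sum>I\<in>{I\<in>F. I \<subseteq> K}. h I)"
      by (rule sum.cong[OF refl]) (simp add: e2)
    finally show ?thesis .
  qed
  have IH: "(\<Sum>I\<in>{I\<in>F. I \<subseteq> K}. g I) \<le> 4 * (X K - (Y K)^2 / (W K + m K))" if K: "K \<in> Ch" for K
  proof -
    have KF: "K \<in> F" "K \<subseteq> J" "K \<noteq> J" using ChF K by auto
    have "{I\<in>F. I \<subseteq> K} \<subset> {I\<in>F. I \<subseteq> J}"
    proof
      show "{I\<in>F. I \<subseteq> K} \<subseteq> {I\<in>F. I \<subseteq> J}" using KF by blast
      show "{I\<in>F. I \<subseteq> K} \<noteq> {I\<in>F. I \<subseteq> J}"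
      proof
        assume "{I\<in>F. I \<subseteq> K} = {I\<in>F. I \<subseteq> J}"
        then have "J \<in> {I\<in>F. I \<subseteq> K}" using JF by blast
        then show False using KF by blast
      qed
    qed
    then have "card {I\<in>F. I \<subseteq> K} < card {I\<in>F. I \<subseteq> J}"
      by (rule psubset_card_mono[rotated]) (use F in simp)
    then show ?thesis using less.hyps KF(1) unfolding g_def m_def by blast
  qed
  define R where "R = J - \<Union>Ch"
  have RM: "R \<in> sets M"
  proof -
    have "\<forall>K\<in>Ch. K \<in> sets M" using ChD DD_sets by blast
    then have "\<Union>Ch \<in> sets M" using fCh by blast
    then show ?thesis unfolding R_def using DD_sets[OF JD] by blast
  qed
  have RJ: "R \<subseteq> J" unfolding R_def by blast
  have ChJ: "\<forall>K\<in>Ch. K \<subseteq> J" using ChF by blast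
  have dW: "W J = W R + (\<Sum>K\<in>Ch. W K)"
    unfolding W_def R_def by (rule decomp[OF JD fCh ChD ChJ disjCh]) (use u_loc_int JD in blast)
  have dY: "Y J = Y R + (\<Sum>K\<in>Ch. Y K)"
    unfolding Y_def R_def by (rule decomp[OF JD fCh ChD ChJ disjCh Y_int_DD[OF JD]])
  have dX: "X J = X R + (\<Sum>K\<in>Ch. X K)"
    unfolding X_def R_def by (rule decomp[OF JD fCh ChD ChJ disjCh X_int[OF DD_sets[OF JD]]])
  have cs: "(Y R)^2 \<le> X R * W R" by (rule CS[OF JD RM RJ])
  have WR0: "0 \<le> W R" by (rule W_nonneg[OF RM])
  have XR0: "0 \<le> X R" by (rule X_nonneg[OF RM])
  have YR0: "W R = 0 \<Longrightarrow> Y R = 0" using cs by simp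
  have mJ: "m J = c J + (\<Sum>K\<in>Ch. m K)" unfolding m_def by (rule split)
  have m0: "0 \<le> m K" if "K \<in> F" for K
    unfolding m_def using c0 by (intro sum_nonneg) auto
  have bpos: "\<forall>K\<in>Ch. 0 < W K + m K" using ChF Wp m0 by (simp add: add_pos_nonneg)
  have t1: "(\<Sum>K\<in>Ch. Y K)^2 / (\<Sum>K\<in>Ch. W K + m K) \<le> (\<Sum>K\<in>Ch. (Y K)^2 / (W K + m K))"
    by (rule titu[OF fCh]) (use bpos in \<open>auto simp: less_imp_le\<close>)
  have sb0: "0 \<le> (\<Sum>K\<in>Ch. W K + m K)" using bpos by (intro sum_nonneg) (simp add: less_imp_le)
  have sbz: "(\<Sum>K\<in>Ch. Y K) = 0" if "(\<Sum>K\<in>Ch. W K + m K) = 0"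
  proof -
    have "Ch = {}"
    proof (rule ccontr)
      assume "Ch \<noteq> {}"
      then have "0 < (\<Sum>K\<in>Ch. W K + m K)" using bpos fCh by (intro sum_pos) auto
      then show False using that by simp
    qed
    then show ?thesis by simp
  qed
  have t2: "((\<Sum>K\<in>Ch. Y K) + Y R)^2 / ((\<Sum>K\<in>Ch. W K + m K) + W R)
      \<le> (\<Sum>K\<in>Ch. Y K)^2 / (\<Sum>K\<in>Ch. W K + m K) + (Y R)^2 / W R"
    by (rule titu2) (use sb0 WR0 sbz YR0 in auto)
  have t3: "(Y R)^2 / W R \<le> X R"
  proof (cases "W R = 0")
    case True then show ?thesis using XR0 by simp
  next
    case False then have "0 < W R" using WR0 by simp
    then show ?thesis using cs by (simp add: divide_le_eq)
  qed
  have Dsum: "(\<Sum>K\<in>Ch. W K + m K) + W R = W J + m J - c J"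
    using dW mJ by (simp add: sum.distrib)
  have key: "(Y J)^2 / (W J + m J - c J) \<le> (\<Sum>K\<in>Ch. (Y K)^2 / (W K + m K)) + X R"
  proof -
    have "(Y J)^2 / (W J + m J - c J) = ((\<Sum>K\<in>Ch. Y K) + Y R)^2 / ((\<Sum>K\<in>Ch. W K + m K) + W R)"
      using dY Dsum by (simp add: add.commute)
    then show ?thesis using t1 t2 t3 by linarith
  qed
  have WJ: "0 < W J" using Wp JF by blast
  have cJ0: "0 \<le> c J" using c0 JF by blast
  have cm: "c J \<le> m J" using mJ m0 ChF by (simp add: sum_nonneg)
  have mW: "m J \<le> W J" using carl JF unfolding m_def by blast
  have ba: "g J \<le> 4 * (Y J)^2 / (W J + m J - c J) - 4 * (Y J)^2 / (W J + m J)"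
    unfolding g_def by (rule bell_arith[OF WJ cJ0 cm mW])
  have "(\<Sum>I\<in>{I\<in>F. I \<subseteq> J}. g I) = g J + (\<Sum>K\<in>Ch. \<Sum>I\<in>{I\<in>F. I \<subseteq> K}. g I)"
    by (rule split)
  also have "\<dots> \<le> g J + (\<Sum>K\<in>Ch. 4 * (X K - (Y K)^2 / (W K + m K)))"
    using IH by (intro add_left_mono sum_mono) auto
  also have "\<dots> = g J + 4 * (\<Sum>K\<in>Ch. X K) - 4 * (\<Sum>K\<in>Ch. (Y K)^2 / (W K + m K))"
    by (simp add: sum_distrib_left sum_subtractf algebra_simps)
  also have "\<dots> \<le> 4 * (X J - (Y J)^2 / (W J + m J))"
    using ba key dX by (simp add: algebra_simps)
  finally show ?case unfolding g_def m_def .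
qed

end


lemma count_le:
  fixes g :: "'i \<Rightarrow> ennreal"
  assumes S: "countable S" and B: "\<And>F. finite F \<Longrightarrow> F \<subseteq> S \<Longrightarrow> (\<Sum>x\<in>F. g x) \<le> B"
  shows "(\<integral>\<^sup>+ x. g x \<partial>count_space S) \<le> B"
proof (cases "finite S")
  case True then show ?thesis using B[of S] by (simp add: nn_integral_count_space_finite)
next
  case False
  define h where "h = from_nat_into S"
  have bij: "bij_betw h UNIV S" unfolding h_def by (rule bij_betw_from_nat_into[OF S False])
  have "(\<integral>\<^sup>+ x. g x \<partial>count_space S) = (\<integral>\<^sup>+ n. g (h n) \<partial>count_space UNIV)"
    by (rule nn_integral_bij_count_space[OF bij, symmetric])
  also have "\<dots> = (\<Sum>n. g (h n))" by (rule nn_integral_count_space_nat)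
  also have "\<dots> = (SUP N. \<Sum>n<N. g (h n))" by (rule suminf_eq_SUP)
  also have "\<dots> \<le> B"
  proof (rule SUP_least)
    fix N
    have inj: "inj_on h {..<N}" using bij unfolding bij_betw_def by (auto intro: inj_on_subset)
    have "(\<Sum>n<N. g (h n)) = (\<Sum>x\<in>h ` {..<N}. g x)"
      by (rule sum.reindex[OF inj, symmetric, unfolded comp_def])
    also have "\<dots> \<le> B" using bij unfolding bij_betw_def by (intro B) auto
    finally show "(\<Sum>n<N. g (h n)) \<le> B" .
  qed
  finally show ?thesis .
qed

context th
begin

lemma bellman_total:
  assumes F: "finite F" "F \<subseteq> DD D" and Wp: "\<forall>I\<in>F. 0 < W I" and c0: "\<forall>I\<in>F. 0 \<le> c I"
    and carl: "\<forall>J\<in>F. (\<Sum>I\<in>{I\<in>F. I \<subseteq> J}. c I) \<le> W J"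
  shows "(\<Sum>I\<in>F. c I * (Y I / W I)^2) \<le> 4 * Xtot"
proof -
  have fM: "finite (maxels F)" using finite_subset[OF maxels_sub F(1)] .
  have MF: "\<forall>L\<in>maxels F. L \<in> F" using maxels_sub by blast
  have "(\<Sum>I\<in>F. c I * (Y I / W I)^2) = (\<Sum>L\<in>maxels F. \<Sum>I\<in>{I\<in>F. I \<subseteq> L}. c I * (Y I / W I)^2)"
    by (rule sum_maxels[OF F])
  also have "\<dots> \<le> (\<Sum>L\<in>maxels F. 4 * X L)"
  proof (rule sum_mono)
    fix L assume "L \<in> maxels F"
    then have LF: "L \<in> F" using MF by blast
    have b: "(\<Sum>I\<in>{I\<in>F. I \<subseteq> L}. c I * (Y I / W I)^2)
            \<le> 4 * (X L - (Y L)^2 / (W L + (\<Sum>I\<in>{I\<in>F. I \<subseteq> L}. c I)))"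
      by (rule bellman[OF F Wp c0 carl LF])
    have "0 \<le> W L + (\<Sum>I\<in>{I\<in>F. I \<subseteq> L}. c I)"
      using Wp LF c0 by (intro add_nonneg_nonneg sum_nonneg) (auto simp: less_imp_le)
    then have "0 \<le> (Y L)^2 / (W L + (\<Sum>I\<in>{I\<in>F. I \<subseteq> L}. c I))" by simp
    then have "4 * (X L - (Y L)^2 / (W L + (\<Sum>I\<in>{I\<in>F. I \<subseteq> L}. c I))) \<le> 4 * X L" by simp
    with b show "(\<Sum>I\<in>{I\<in>F. I \<subseteq> L}. c I * (Y I / W I)^2) \<le> 4 * X L" by (rule order_trans)
  qed
  also have "\<dots> = 4 * X (\<Union>L\<in>maxels F. L)"
  proof -
    have "X (\<Union>L\<in>maxels F. L) = (\<Sum>L\<in>maxels F. X L)"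
      unfolding X_def
    proof (rule set_integral_finite_Union[OF fM])
      show "disjoint_family_on (\<lambda>L. L) (maxels F)" using maxels_disjoint_family[OF F(2)] .
      fix L assume "L \<in> maxels F"
      then have "L \<in> DD D" using MF F by blast
      then show "set_integrable M L (\<lambda>x. (f x)^2 * u x)" "L \<in> sets M" using X_int DD_sets by auto
    qed
    then show ?thesis by (simp add: sum_distrib_left)
  qed
  also have "\<dots> \<le> 4 * Xtot"
  proof -
    have UM: "(\<Union>L\<in>maxels F. L) \<in> sets M"
    proof (rule sets.finite_UN[OF fM])
      fix L assume "L \<in> maxels F"
      then have "L \<in> DD D" using MF F by blast
      then show "L \<in> sets M" by (rule DD_sets)
    qed
    have i1: "integrable M (\<lambda>x. indicator (\<Union>L\<in>maxels F. L) x *\<^sub>R ((f x)^2 * u x))"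
      using X_int[OF UM] unfolding set_integrable_def .
    have "X (\<Union>L\<in>maxels F. L) \<le> Xtot"
      unfolding X_def Xtot_def set_lebesgue_integral_def
      by (rule integral_mono[OF i1 f2u_int]) (use u_nonneg in \<open>auto split: split_indicator\<close>)
    then show ?thesis by simp
  qed
  finally show ?thesis .
qed

lemma Calpha_pos: "0 < Calpha"
proof -
  have "0 < 1 / \<alpha> 1" using alpha_pos by simp
  moreover have "0 \<le> (LINT t:{1..}|lborel. 1/(t * \<alpha> t))"
    unfolding set_lebesgue_integral_def
    by (rule integral_nonneg_AE, rule AE_I2) (use alpha_pos in \<open>auto split: split_indicator simp: less_imp_le\<close>)
  ultimately show ?thesis unfolding Calpha_def by (rule add_pos_nonneg)
qed

lemma lhs_good:
  assumes g: "good I"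
  shows "lhs_term M D \<alpha> u f a I = a I * W I * (1/(r I * \<alpha> (r I))) * (Y I / W I)^2"
proof -
  have I: "I \<in> DD D" using good_facts(1)[OF g] .
  have m: "0 < measure M I" using DD_measure_pos[OF I] .
  have W: "0 < W I" using good_facts(3)[OF g] .
  have us: "0 < us I" using good_facts(8)[OF g] .
  have r1: "1 \<le> r I" using good_facts(5)[OF g] .
  have al: "0 < \<alpha> (r I)" using alpha_pos r1 by simp
  have rW: "r I * W I = us I * measure M I" using good_facts(6)[OF g] by simp
  have nt: "\<not> (ustar M D u I = \<infinity> \<or> avg M I u = 0)" using g unfolding good_def by simp
  have avf: "avg M I (\<lambda>x. f x * u x) = Y I / measure M I" unfolding avg_def Y_def ..
  have "lhs_term M D \<alpha> u f a I = (Y I / measure M I)^2 / (\<alpha> (r I) * us I) * a I * measure M I"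
    unfolding lhs_term_def using nt avf by (simp add: r_def us_def)
  also have "\<dots> = a I * (Y I)^2 / ((us I * measure M I) * \<alpha> (r I))"
    using m us al by (simp add: field_simps power2_eq_square)
  also have "\<dots> = a I * (Y I)^2 / ((r I * W I) * \<alpha> (r I))" using rW by simp
  also have "\<dots> = a I * W I * (1/(r I * \<alpha> (r I))) * (Y I / W I)^2"
    using W al r1 by (simp add: field_simps power2_eq_square)
  finally show ?thesis .
qed

lemma lhs_bad: "I \<in> DD D \<Longrightarrow> \<not> good I \<Longrightarrow> lhs_term M D \<alpha> u f a I = 0"
  unfolding good_def lhs_term_def by auto

lemma psi_good: assumes g: "good I" shows "0 \<le> 1/(r I * \<alpha> (r I))"
proof -
  have r1: "1 \<le> r I" using good_facts(5)[OF g] .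
  then have "0 < \<alpha> (r I)" using alpha_pos by simp
  then have "0 < r I * \<alpha> (r I)" using r1 by simp
  then show ?thesis by simp
qed

lemma lhs_nonneg:
  assumes I: "I \<in> DD D" shows "0 \<le> lhs_term M D \<alpha> u f a I"
proof (cases "good I")
  case True
  have "0 \<le> a I" using a_nonneg I by blast
  moreover have "0 \<le> W I" using good_facts(3)[OF True] by simp
  moreover have "0 \<le> 1/(r I * \<alpha> (r I))" by (rule psi_good[OF True])
  ultimately show ?thesis unfolding lhs_good[OF True] by simp
next
  case False then show ?thesis using lhs_bad I by simp
qed

lemma finite_bound:
  assumes F: "finite F" "F \<subseteq> DD D"
  shows "(\<Sum>I\<in>F. lhs_term M D \<alpha> u f a I) \<le> 4 * Calpha * A * Xtot"
proof -
  define F0 where "F0 = {I\<in>F. good I}"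
  define c' where "c' I = a I * W I * (1/(r I * \<alpha> (r I)))" for I
  have fF0: "finite F0" using F unfolding F0_def by simp
  have gF0: "\<forall>I\<in>F0. good I" unfolding F0_def by simp
  have F0D: "F0 \<subseteq> DD D" using F unfolding F0_def by blast
  have "(\<Sum>I\<in>F. lhs_term M D \<alpha> u f a I) = (\<Sum>I\<in>F0. lhs_term M D \<alpha> u f a I)"
  proof (rule sum.mono_neutral_right[OF F(1)])
    show "F0 \<subseteq> F" unfolding F0_def by blast
    show "\<forall>i\<in>F - F0. lhs_term M D \<alpha> u f a i = 0"
    proof
      fix i assume "i \<in> F - F0"
      then have "i \<in> DD D" "\<not> good i" using F unfolding F0_def by auto
      then show "lhs_term M D \<alpha> u f a i = 0" by (rule lhs_bad)
    qed
  qed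
  also have "\<dots> = (\<Sum>I\<in>F0. c' I * (Y I / W I)^2)"
    using gF0 lhs_good unfolding c'_def by (intro sum.cong) auto
  finally have e: "(\<Sum>I\<in>F. lhs_term M D \<alpha> u f a I) = (\<Sum>I\<in>F0. c' I * (Y I / W I)^2)" .
  have c'0: "\<forall>I\<in>F0. 0 \<le> c' I"
  proof
    fix I assume "I \<in> F0"
    then have g: "good I" using gF0 by blast
    have "0 \<le> a I" using a_nonneg good_facts(1)[OF g] by blast
    moreover have "0 \<le> W I" using good_facts(3)[OF g] by simp
    moreover have "0 \<le> 1/(r I * \<alpha> (r I))" by (rule psi_good[OF g])
    ultimately show "0 \<le> c' I" unfolding c'_def by simp
  qed
  have carl': "(\<Sum>I\<in>{I\<in>F0. I \<subseteq> J}. c' I) \<le> A * W J * Calpha" if "J \<in> F0" for J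
    unfolding c'_def using step7[OF _ fF0 gF0] that F0D by blast
  have X0: "0 \<le> Xtot" unfolding Xtot_def
    by (rule integral_nonneg_AE, rule AE_I2) (use u_nonneg in simp)
  show ?thesis
  proof (cases "A = 0")
    case True
    have "c' J = 0" if J: "J \<in> F0" for J
    proof -
      have "c' J \<le> (\<Sum>I\<in>{I\<in>F0. I \<subseteq> J}. c' I)"
        using fF0 c'0 J by (intro member_le_sum) auto
      also have "\<dots> \<le> 0" using carl'[OF J] True by simp
      finally show ?thesis using c'0 J by force
    qed
    then have "(\<Sum>I\<in>F0. c' I * (Y I / W I)^2) = 0" by simp
    then show ?thesis using e True by simp
  next
    case False
    then have Ap: "0 < A" using A_nonneg by simp
    define Kc where "Kc = A * Calpha"
    have Kc: "0 < Kc" unfolding Kc_def using Ap Calpha_pos by simp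
    define c where "c I = c' I / Kc" for I
    have "(\<Sum>I\<in>F0. c I * (Y I / W I)^2) \<le> 4 * Xtot"
    proof (rule bellman_total[OF fF0 F0D])
      show "\<forall>I\<in>F0. 0 < W I" using gF0 good_facts(3) by blast
      show "\<forall>I\<in>F0. 0 \<le> c I" using c'0 Kc unfolding c_def by simp
      show "\<forall>J\<in>F0. (\<Sum>I\<in>{I\<in>F0. I \<subseteq> J}. c I) \<le> W J"
      proof
        fix J assume J: "J \<in> F0"
        have "(\<Sum>I\<in>{I\<in>F0. I \<subseteq> J}. c I) = (\<Sum>I\<in>{I\<in>F0. I \<subseteq> J}. c' I) / Kc"
          unfolding c_def by (simp add: sum_divide_distrib)
        also have "\<dots> \<le> (A * W J * Calpha) / Kc"
          using carl'[OF J] Kc by (simp add: divide_right_mono)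
        also have "\<dots> = W J" unfolding Kc_def using Ap Calpha_pos by simp
        finally show "(\<Sum>I\<in>{I\<in>F0. I \<subseteq> J}. c I) \<le> W J" .
      qed
    qed
    moreover have "(\<Sum>I\<in>F0. c' I * (Y I / W I)^2) = Kc * (\<Sum>I\<in>F0. c I * (Y I / W I)^2)"
      unfolding c_def using Kc by (simp add: sum_distrib_left)
    ultimately have "(\<Sum>I\<in>F0. c' I * (Y I / W I)^2) \<le> Kc * (4 * Xtot)"
      using Kc by simp
    then show ?thesis using e unfolding Kc_def by (simp add: ac_simps)
  qed
qed

lemma main:
  "(\<integral>\<^sup>+ I. ennreal (lhs_term M D \<alpha> u f a I) \<partial>count_space (DD D))
     \<le> ennreal (4 * (1 / \<alpha> 1 + set_lebesgue_integral lborel {1..} (\<lambda>t. 1 / (t * \<alpha> t))))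
       * carl_norm M D a * (\<integral>\<^sup>+ x. ennreal ((f x)\<^sup>2 * u x) \<partial>M)"
proof -
  have X0: "0 \<le> Xtot" unfolding Xtot_def
    by (rule integral_nonneg_AE, rule AE_I2) (use u_nonneg in simp)
  have nnX: "(\<integral>\<^sup>+ x. ennreal ((f x)\<^sup>2 * u x) \<partial>M) = ennreal Xtot"
    unfolding Xtot_def by (rule nn_integral_eq_integral[OF f2u_int], rule AE_I2) (use u_nonneg in simp)
  have C0: "0 \<le> 4 * Calpha" using Calpha_pos by simp
  have rhs: "ennreal (4 * (1 / \<alpha> 1 + set_lebesgue_integral lborel {1..} (\<lambda>t. 1 / (t * \<alpha> t))))
       * carl_norm M D a * (\<integral>\<^sup>+ x. ennreal ((f x)\<^sup>2 * u x) \<partial>M) = ennreal (4 * Calpha * A * Xtot)"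
    unfolding carl_eq nnX Calpha_def[symmetric] using C0 A_nonneg X0
    by (simp add: ennreal_mult)
  show ?thesis unfolding rhs
  proof (rule count_le[OF DD_countable])
    fix F assume F: "finite F" "F \<subseteq> DD D"
    have "(\<Sum>I\<in>F. ennreal (lhs_term M D \<alpha> u f a I)) = ennreal (\<Sum>I\<in>F. lhs_term M D \<alpha> u f a I)"
      using F lhs_nonneg by (intro sum_ennreal) auto
    also have "\<dots> \<le> ennreal (4 * Calpha * A * Xtot)"
      by (rule ennreal_leI[OF finite_bound[OF F]])
    finally show "(\<Sum>I\<in>F. ennreal (lhs_term M D \<alpha> u f a I)) \<le> ennreal (4 * Calpha * A * Xtot)" .
  qed
qed

end

theorem theorem4p2:
  fixes M :: "'a measure" and D :: "int \<Rightarrow> 'a set set"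
    and a :: "'a set \<Rightarrow> real" and \<alpha> :: "real \<Rightarrow> real"
    and u f :: "'a \<Rightarrow> real"
  assumes setting: "filtration_setting M D"
    and a_nonneg: "\<forall>I\<in>DD D. 0 \<le> a I"
    and a_carleson: "carl_norm M D a < \<infinity>"
    and alpha_pos: "\<forall>t\<ge>1. 0 < \<alpha> t"
    and alpha_mono: "mono_on {1..} \<alpha>"
    and alpha_int: "set_integrable lborel {1..} (\<lambda>t. 1 / (t * \<alpha> t))"
    and u_meas: "u \<in> borel_measurable M"
    and u_nonneg: "\<forall>x\<in>space M. 0 \<le> u x"
    and u_loc_int: "\<forall>I\<in>DD D. set_integrable M I u"
    and f_meas: "f \<in> borel_measurable M"
    and f_L2: "(\<integral>\<^sup>+ x. ennreal ((f x)\<^sup>2 * u x) \<partial>M) < \<infinity>"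
  shows "(\<integral>\<^sup>+ I. ennreal (lhs_term M D \<alpha> u f a I) \<partial>count_space (DD D))
           \<le> ennreal (4 * (1 / \<alpha> 1 + set_lebesgue_integral lborel {1..} (\<lambda>t. 1 / (t * \<alpha> t))))
             * carl_norm M D a * (\<integral>\<^sup>+ x. ennreal ((f x)\<^sup>2 * u x) \<partial>M)"
proof -
  interpret th M D a \<alpha> u f
    by (rule th.intro[OF fs.intro[OF setting]], unfold_locales)
       (rule a_nonneg a_carleson alpha_pos alpha_mono alpha_int u_meas u_nonneg u_loc_int f_meas f_L2)+
  show ?thesis by (rule main)
qed


end
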